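(* Let $S$ be a numerical semigroup and let $b\in\mathrm U(\mathrm{Betti}(S))$. Then either $b$ is a minimal element of $(\mathrm{Betti}(S),\le_S)$ and all factorizations of $b$ are isolated, or the number $\mathrm i(b)$ of isolated factorizations of $b$ equals $\mathrm{nc}(\nabla_b)-1$.
   Context: A numerical semigroup $S$ is a submonoid of $(\mathbb N,+)$ with finite complement, minimally generated by $\{n_1,\dots,n_e\}$. Write $a\le_S b$ if $b-a\in S$. Let $\varphi:\mathbb N^e\to S$, $\varphi(a)=\sum_ia_in_i$; $\mathrm Z(s)=\varphi^{-1}(s)$. $\nabla_s$ is the graph on $\mathrm Z(s)$ with distinct $x,y$ adjacent iff $x\cdot y\ne0$; $\mathrm{nc}(\nabla_s)$ is its number of connected components; $s$ is a Betti element if $\nabla_s$ is disconnected; $\mathrm{Betti}(S)$ is the set of Betti elements. For a poset $(X,\le)$, $\mathrm U(X)=\{x\in X: \{y\in X:y\le x\}\text{ is totally ordered}\}$; here $X=(\mathrm{Betti}(S),\le_S)$. A factorization $z\in\mathrm Z(s)$ is isolated if $z\cdot x=0$ for all $x\in\mathrm Z(s)\setminus\{z\}$; $\mathrm i(s)$ is the number of isolated factorizations of $s$. *)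

theory Defs
  imports Main
begin

definition numerical_semigroup :: "nat set \<Rightarrow> bool" where
  "numerical_semigroup S \<longleftrightarrow> 0 \<in> S \<and> (\<forall>a\<in>S. \<forall>b\<in>S. a + b \<in> S) \<and> finite (- S)"

definition msg :: "nat set \<Rightarrow> nat set" where
  "msg S = {n \<in> S. n \<noteq> 0 \<and> \<not> (\<exists>a\<in>S. \<exists>b\<in>S. a \<noteq> 0 \<and> b \<noteq> 0 \<and> n = a + b)}"

definition factorizations :: "nat set \<Rightarrow> nat \<Rightarrow> (nat \<Rightarrow> nat) set" where
  "factorizations S s = {z. (\<forall>i. i \<notin> msg S \<longrightarrow> z i = 0) \<and> (\<Sum>i\<in>msg S. z i * i) = s}"

definition dotp :: "nat set \<Rightarrow> (nat \<Rightarrow> nat) \<Rightarrow> (nat \<Rightarrow> nat) \<Rightarrow> nat" where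
  "dotp S x y = (\<Sum>i\<in>msg S. x i * y i)"

definition nabla_edges :: "nat set \<Rightarrow> nat \<Rightarrow> ((nat \<Rightarrow> nat) \<times> (nat \<Rightarrow> nat)) set" where
  "nabla_edges S s = {(x, y). x \<in> factorizations S s \<and> y \<in> factorizations S s \<and> x \<noteq> y \<and> dotp S x y \<noteq> 0}"

definition nc :: "nat set \<Rightarrow> nat \<Rightarrow> nat" where
  "nc S s = card (factorizations S s // (nabla_edges S s)\<^sup>*)"

definition betti :: "nat set \<Rightarrow> nat set" where
  "betti S = {s \<in> S. nc S s > 1}"

definition leS :: "nat set \<Rightarrow> nat \<Rightarrow> nat \<Rightarrow> bool" where
  "leS S a b \<longleftrightarrow> a \<le> b \<and> b - a \<in> S"

definition U_betti :: "nat set \<Rightarrow> nat set" where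
  "U_betti S = {x \<in> betti S. \<forall>y\<in>betti S. \<forall>z\<in>betti S.
      leS S y x \<longrightarrow> leS S z x \<longrightarrow> leS S y z \<or> leS S z y}"

definition minimal_betti :: "nat set \<Rightarrow> nat \<Rightarrow> bool" where
  "minimal_betti S b \<longleftrightarrow> b \<in> betti S \<and> (\<forall>c\<in>betti S. leS S c b \<longrightarrow> c = b)"

definition isolated :: "nat set \<Rightarrow> nat \<Rightarrow> (nat \<Rightarrow> nat) \<Rightarrow> bool" where
  "isolated S s z \<longleftrightarrow> z \<in> factorizations S s \<and>
      (\<forall>x\<in>factorizations S s - {z}. dotp S z x = 0)"

definition num_isolated :: "nat set \<Rightarrow> nat \<Rightarrow> nat" where
  "num_isolated S s = card {z. isolated S s z}"

end

theory Submission
  imports Defs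
begin

lemma ns_add: "numerical_semigroup S \<Longrightarrow> a \<in> S \<Longrightarrow> b \<in> S \<Longrightarrow> a + b \<in> S"
  by (simp add: numerical_semigroup_def)

lemma ns_zero: "numerical_semigroup S \<Longrightarrow> 0 \<in> S"
  by (simp add: numerical_semigroup_def)

lemma ns_mult: "numerical_semigroup S \<Longrightarrow> a \<in> S \<Longrightarrow> k * a \<in> S"
  by (induction k) (auto simp: ns_zero ns_add)

lemma ns_sum: assumes ns: "numerical_semigroup S" and "finite A" "\<forall>i\<in>A. f i \<in> S" shows "sum f A \<in> S"
  using assms(2,3) by (induction A rule: finite_induct) (auto simp: ns_zero[OF ns] ns_add[OF ns])

lemma msg_sub: "msg S \<subseteq> S" by (auto simp: msg_def)
lemma msg_pos: "i \<in> msg S \<Longrightarrow> i > 0" by (auto simp: msg_def)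

lemma msg_finite: assumes ns: "numerical_semigroup S" shows "finite (msg S)"
proof -
  have f: "finite (-S)" using ns by (simp add: numerical_semigroup_def)
  obtain M where M: "\<forall>x\<in>-S. x \<le> M" using f finite_nat_set_iff_bounded_le by blast
  define N where "N = Suc M"
  have N: "N \<ge> 1" "\<forall>n\<ge>N. n \<in> S"
  proof -
    show "N \<ge> 1" by (simp add: N_def)
    show "\<forall>n\<ge>N. n \<in> S"
    proof (intro allI impI)
      fix n assume "N \<le> n"
      hence "\<not> n \<le> M" by (simp add: N_def)
      thus "n \<in> S" using M by blast
    qed
  qed
  have "msg S \<subseteq> {..<2*N}"
  proof
    fix n assume n: "n \<in> msg S"
    show "n \<in> {..<2*N}"
    proof (rule ccontr)
      assume "n \<notin> {..<2*N}"
      hence "n \<ge> 2*N" by simp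
      hence "N \<in> S" "n - N \<in> S" "N \<noteq> 0" "n - N \<noteq> 0" "n = N + (n - N)" using N by auto
      thus False using n unfolding msg_def by blast
    qed
  qed
  thus ?thesis by (rule finite_subset) simp
qed

lemma fact_in_S: assumes ns: "numerical_semigroup S" and z: "z \<in> factorizations S s" shows "s \<in> S"
proof -
  have e: "s = (\<Sum>i\<in>msg S. z i * i)" using z by (simp add: factorizations_def)
  have "\<forall>i\<in>msg S. z i * i \<in> S" using ns_mult[OF ns] msg_sub by blast
  hence "(\<Sum>i\<in>msg S. z i * i) \<in> S" by (rule ns_sum[OF ns msg_finite[OF ns]])
  thus ?thesis using e by simp
qed

lemma fact_add: "a \<in> factorizations S s \<Longrightarrow> w \<in> factorizations S t \<Longrightarrow> u = s + t
   \<Longrightarrow> (\<lambda>j. a j + w j) \<in> factorizations S u"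
  by (auto simp: factorizations_def distrib_right sum.distrib)

lemma fact_unit: assumes "finite (msg S)" "i \<in> msg S"
  shows "(\<lambda>j. if j = i then 1 else 0) \<in> factorizations S i"
proof -
  have "(\<Sum>j\<in>msg S. (if j = i then 1 else 0) * j) = (\<Sum>j\<in>msg S. if j = i then i else 0)"
    by (rule sum.cong) auto
  also have "\<dots> = i" using assms by (simp add: sum.delta)
  finally show ?thesis using assms by (auto simp: factorizations_def)
qed

lemma fact_exists: assumes ns: "numerical_semigroup S" shows "s \<in> S \<Longrightarrow> factorizations S s \<noteq> {}"
proof (induction s rule: less_induct)
  case (less s)
  show ?case
  proof (cases "s = 0")
    case True
    have "(\<lambda>_. 0) \<in> factorizations S s" using True by (simp add: factorizations_def)
    thus ?thesis by blast
  next
    case False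
    show ?thesis
    proof (cases "s \<in> msg S")
      case True
      thus ?thesis using fact_unit[OF msg_finite[OF ns] True] by blast
    next
      case notm: False
      then obtain a c where ac: "a \<in> S" "c \<in> S" "a \<noteq> 0" "c \<noteq> 0" "s = a + c"
        using less.prems False by (auto simp: msg_def)
      have "a < s" "c < s" using ac by auto
      then obtain za zc where "za \<in> factorizations S a" "zc \<in> factorizations S c"
        using less.IH ac(1,2) by blast
      then have "(\<lambda>j. za j + zc j) \<in> factorizations S s" using fact_add ac(5) by blast
      thus ?thesis by blast
    qed
  qed
qed

lemma fact_remove:
  assumes fm: "finite (msg S)" and x: "x \<in> factorizations S s" and i: "i \<in> msg S" and xi: "x i > 0"
  shows "x(i := x i - 1) \<in> factorizations S (s - i) \<and> i \<le> s"
proof -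
  define x' where "x' = x(i := x i - 1)"
  obtain k where k: "x i = Suc k" using xi gr0_implies_Suc by blast
  have e: "\<And>j. x j * j = x' j * j + (if j = i then i else 0)" using k by (auto simp: x'_def)
  have "s = (\<Sum>j\<in>msg S. x j * j)" using x by (simp add: factorizations_def)
  also have "\<dots> = (\<Sum>j\<in>msg S. x' j * j) + (\<Sum>j\<in>msg S. if j = i then i else 0)"
    by (simp add: e sum.distrib)
  also have "(\<Sum>j\<in>msg S. if j = i then i else 0) = i" using fm i by (simp add: sum.delta)
  finally have s: "s = (\<Sum>j\<in>msg S. x' j * j) + i" .
  have "\<forall>j. j \<notin> msg S \<longrightarrow> x' j = 0" using x i by (auto simp: x'_def factorizations_def)
  with s show ?thesis unfolding x'_def[symmetric] by (auto simp: factorizations_def)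
qed

lemma upd_inj: fixes x y :: "nat \<Rightarrow> nat" assumes "x(i := x i - 1) = y(i := y i - 1)" "x i > 0" "y i > 0" shows "x = y"
proof (rule ext)
  fix j
  have h: "(x(i := x i - 1)) j = (y(i := y i - 1)) j" using assms(1) by simp
  show "x j = y j"
  proof (cases "j = i")
    case True
    hence "x i - 1 = y i - 1" using h by simp
    hence "x i = y i" using assms(2,3) by arith
    thus ?thesis using True by simp
  next
    case False thus ?thesis using h by simp
  qed
qed

lemma dotp_iff: "finite (msg S) \<Longrightarrow> dotp S x y \<noteq> 0 \<longleftrightarrow> (\<exists>i\<in>msg S. x i > 0 \<and> y i > 0)"
  by (auto simp: dotp_def)

lemma sym_edges: "sym (nabla_edges S s)"
  by (auto simp: sym_def nabla_edges_def dotp_def mult.commute)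

lemma share_rtrancl:
  assumes "finite (msg S)" "x \<in> factorizations S s" "y \<in> factorizations S s" "i \<in> msg S" "x i > 0" "y i > 0"
  shows "(x, y) \<in> (nabla_edges S s)\<^sup>*"
proof (cases "x = y")
  case True thus ?thesis by simp
next
  case False
  have "dotp S x y \<noteq> 0" using dotp_iff[OF assms(1)] assms by blast
  hence "(x, y) \<in> nabla_edges S s" using False assms by (simp add: nabla_edges_def)
  thus ?thesis by simp
qed

lemma fact_finite: assumes ns: "numerical_semigroup S" shows "finite (factorizations S s)"
proof -
  have fm: "finite (msg S)" by (rule msg_finite[OF ns])
  have "factorizations S s \<subseteq> {f. \<forall>x. (x \<in> msg S \<longrightarrow> f x \<in> {0..s}) \<and> (x \<notin> msg S \<longrightarrow> f x = 0)}"
  proof (safe)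
    fix z x assume z: "z \<in> factorizations S s" and x: "x \<in> msg S"
    have "z x \<le> z x * x" using msg_pos[OF x] by simp
    also have "\<dots> \<le> (\<Sum>i\<in>msg S. z i * i)" by (rule member_le_sum[OF x _ fm]) simp
    also have "\<dots> = s" using z by (simp add: factorizations_def)
    finally show "z x \<in> {0..s}" by simp
  next
    fix z x assume "z \<in> factorizations S s" "x \<notin> msg S" thus "z x = 0"
      by (simp add: factorizations_def)
  qed
  thus ?thesis by (rule finite_subset) (rule finite_set_of_finite_funs[OF fm], simp)
qed

lemma img_eq: assumes "sym R" "(x, y) \<in> R\<^sup>*" shows "R\<^sup>*``{x} = R\<^sup>*``{y}"
proof -
  have s: "sym (R\<^sup>*)" using sym_rtrancl[OF assms(1)] .
  have "(y, x) \<in> R\<^sup>*" using s assms(2) by (meson symD)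
  thus ?thesis using assms(2) by (auto intro: rtrancl_trans)
qed

lemma quot_img: "A // r = (\<lambda>x. r``{x}) ` A" by (auto simp: quotient_def)

lemma leS_trans: "numerical_semigroup S \<Longrightarrow> leS S a b \<Longrightarrow> leS S b c \<Longrightarrow> leS S a c"
proof -
  assume ns: "numerical_semigroup S" and h: "leS S a b" "leS S b c"
  have eq: "c - a = (c - b) + (b - a)" using h by (auto simp: leS_def)
  have "(c - b) + (b - a) \<in> S" using h ns_add[OF ns] unfolding leS_def by blast
  hence "c - a \<in> S" by (metis eq)
  thus "leS S a c" using h by (auto simp: leS_def)
qed

lemma fact_zero: assumes fm: "finite (msg S)" and z: "z \<in> factorizations S 0" shows "z = (\<lambda>_. 0)"
proof (rule ext)
  fix j
  have h: "\<forall>i. i \<notin> msg S \<longrightarrow> z i = 0" "(\<Sum>i\<in>msg S. z i * i) = 0"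
    using z by (auto simp: factorizations_def)
  show "z j = 0"
  proof (cases "j \<in> msg S")
    case True
    hence "z j * j = 0" using h(2) fm by simp
    thus ?thesis using msg_pos[OF True] by simp
  qed (use h in auto)
qed

lemma fact_nonzero: assumes "finite (msg S)" "z \<in> factorizations S s" "s \<noteq> 0"
  shows "\<exists>j\<in>msg S. z j > 0"
proof (rule ccontr)
  assume "\<not> ?thesis"
  hence "\<forall>j\<in>msg S. z j = 0" by auto
  hence z0: "(\<Sum>i\<in>msg S. z i * i) = 0" by simp
  have "s = (\<Sum>i\<in>msg S. z i * i)" using assms(2) by (simp add: factorizations_def)
  thus False using z0 assms(3) by linarith
qed

lemma betti_below: assumes ns: "numerical_semigroup S"
  shows "u \<in> factorizations S s \<Longrightarrow> v \<in> factorizations S s \<Longrightarrow> u \<noteq> v \<Longrightarrow> \<exists>c\<in>betti S. leS S c s"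
proof (induction s arbitrary: u v rule: less_induct)
  case (less s)
  have fm: "finite (msg S)" by (rule msg_finite[OF ns])
  have sS: "s \<in> S" using fact_in_S[OF ns less.prems(1)] .
  show ?case
  proof (cases "s \<in> betti S")
    case True thus ?thesis using ns_zero[OF ns] by (auto simp: leS_def)
  next
    case False
    let ?R = "(nabla_edges S s)\<^sup>*"
    have "nc S s \<le> 1" using False sS by (simp add: betti_def)
    hence c1: "card ((\<lambda>x. ?R``{x}) ` factorizations S s) \<le> Suc 0" by (simp add: nc_def quot_img)
    have fin: "finite ((\<lambda>x. ?R``{x}) ` factorizations S s)" using fact_finite[OF ns] by simp
    have all: "\<forall>a1\<in>(\<lambda>x. ?R``{x}) ` factorizations S s. \<forall>a2\<in>(\<lambda>x. ?R``{x}) ` factorizations S s. a1 = a2"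
      using card_le_Suc0_iff_eq[OF fin] c1 by (rule iffD1)
    have m1: "?R``{u} \<in> (\<lambda>x. ?R``{x}) ` factorizations S s" using less.prems(1) by (rule imageI)
    have m2: "?R``{v} \<in> (\<lambda>x. ?R``{x}) ` factorizations S s" using less.prems(2) by (rule imageI)
    have eq: "?R``{u} = ?R``{v}"
      by (rule all[rule_format, OF m1 m2])
    have "v \<in> ?R``{u}" unfolding eq by simp
    hence uv: "(u, v) \<in> ?R" by simp
    obtain y where y: "(u, y) \<in> nabla_edges S s"
    proof (rule converse_rtranclE[OF uv])
      assume "u = v" thus ?thesis using less.prems(3) by simp
    next
      fix y assume "(u, y) \<in> nabla_edges S s" thus ?thesis using that by blast
    qed
    hence yZ: "y \<in> factorizations S s" "u \<noteq> y" "dotp S u y \<noteq> 0" by (auto simp: nabla_edges_def)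
    then obtain i where i: "i \<in> msg S" "u i > 0" "y i > 0" using dotp_iff[OF fm] by blast
    have r1: "u(i := u i - 1) \<in> factorizations S (s - i)" "i \<le> s"
      using fact_remove[OF fm less.prems(1) i(1,2)] by auto
    have r2: "y(i := y i - 1) \<in> factorizations S (s - i)"
      using fact_remove[OF fm yZ(1) i(1,3)] by auto
    have ne: "u(i := u i - 1) \<noteq> y(i := y i - 1)" using upd_inj i yZ(2) by blast
    have lt: "s - i < s" using msg_pos[OF i(1)] r1(2) by simp
    obtain c where c: "c \<in> betti S" "leS S c (s - i)" using less.IH[OF lt r1(1) r2 ne] by blast
    have "leS S (s - i) s" using r1(2) msg_sub i(1) by (auto simp: leS_def)
    thus ?thesis using c leS_trans[OF ns] by blast
  qed
qed

theorem theorem5p9: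
  fixes S :: "nat set" and b :: nat
  assumes "numerical_semigroup S"
    and "b \<in> U_betti S"
  shows "(minimal_betti S b \<and> (\<forall>z\<in>factorizations S b. isolated S b z))
         \<or> num_isolated S b = nc S b - 1"
proof -
  have ns: "numerical_semigroup S" by (rule assms(1))
  have fm: "finite (msg S)" by (rule msg_finite[OF ns])
  have bB: "b \<in> betti S" using assms(2) by (simp add: U_betti_def)
  have bS: "b \<in> S" using bB by (simp add: betti_def)
  define Z where "Z = factorizations S b"
  define R where "R = (nabla_edges S b)\<^sup>*"
  show ?thesis
  proof (cases "\<exists>c\<in>betti S. leS S c b \<and> c \<noteq> b")
    case False
    have mb: "minimal_betti S b" using False bB by (auto simp: minimal_betti_def)
    have "\<forall>z\<in>Z. isolated S b z"
    proof
      fix z assume z: "z \<in> Z"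
      show "isolated S b z" unfolding isolated_def
      proof (intro conjI ballI)
        show zZ: "z \<in> factorizations S b" using z Z_def by simp
        fix x assume x: "x \<in> factorizations S b - {z}"
        show "dotp S z x = 0"
        proof (rule ccontr)
          assume "dotp S z x \<noteq> 0"
          then obtain i where i: "i \<in> msg S" "z i > 0" "x i > 0" using dotp_iff[OF fm] by blast
          have r1: "z(i := z i - 1) \<in> factorizations S (b - i)" "i \<le> b"
            using fact_remove[OF fm zZ i(1,2)] by auto
          have r2: "x(i := x i - 1) \<in> factorizations S (b - i)"
          proof -
            have xZ: "x \<in> factorizations S b" using x by simp
            show ?thesis using fact_remove[OF fm xZ i(1) i(3)] by blast
          qed
          have ne: "z(i := z i - 1) \<noteq> x(i := x i - 1)" using upd_inj i x by blast
          obtain c where c: "c \<in> betti S" "leS S c (b - i)" using betti_below[OF ns r1(1) r2 ne] by blast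
          have "leS S (b - i) b" using r1(2) msg_sub i(1) by (auto simp: leS_def)
          hence "leS S c b" using c leS_trans[OF ns] by blast
          moreover have "c \<noteq> b" using c(2) msg_pos[OF i(1)] r1(2) by (auto simp: leS_def)
          ultimately show False using False c(1) by blast
        qed
      qed
    qed
    thus ?thesis using mb Z_def by blast
  next
    case True
    then obtain c0 where c0: "c0 \<in> betti S" "leS S c0 b" "c0 \<noteq> b" by blast
    define c1 where "c1 = (LEAST c. c \<in> betti S \<and> leS S c b)"
    have c1P: "c1 \<in> betti S \<and> leS S c1 b"
      using LeastI[of "\<lambda>c. c \<in> betti S \<and> leS S c b" c0] c0 c1_def by blast
    have c1le: "\<And>c. c \<in> betti S \<Longrightarrow> leS S c b \<Longrightarrow> c1 \<le> c"
      unfolding c1_def by (rule Least_le) blast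
    have c1min: "\<And>c. c \<in> betti S \<Longrightarrow> leS S c b \<Longrightarrow> leS S c1 c"
    proof -
      fix c assume c: "c \<in> betti S" "leS S c b"
      have "leS S c1 c \<or> leS S c c1" using assms(2) c c1P unfolding U_betti_def by blast
      thus "leS S c1 c" using c1le[OF c] ns_zero[OF ns] by (auto simp: leS_def)
    qed
    have c1b: "c1 < b" using c1le[OF c0(1,2)] c0 by (auto simp: leS_def)
    have "nc S c1 > 1" using c1P by (simp add: betti_def)
    hence "card ((\<lambda>x. ((nabla_edges S c1)\<^sup>*)``{x}) ` factorizations S c1) > 1"
      by (simp add: nc_def quot_img)
    hence "card (factorizations S c1) > 1" using card_image_le[OF fact_finite[OF ns]]
      by (rule less_le_trans)
    then obtain a0 a1 where a: "a0 \<in> factorizations S c1" "a1 \<in> factorizations S c1" "a0 \<noteq> a1"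
    proof -
      have "\<not> (\<forall>a1\<in>factorizations S c1. \<forall>a2\<in>factorizations S c1. a1 = a2)"
        using card_le_Suc0_iff_eq[OF fact_finite[OF ns, of c1]] \<open>card (factorizations S c1) > 1\<close>
        by linarith
      thus ?thesis using that by blast
    qed
    have c1pos: "c1 \<noteq> 0"
    proof
      assume "c1 = 0"
      hence "a0 = (\<lambda>_. 0)" "a1 = (\<lambda>_. 0)" using a(1,2) fact_zero[OF fm] by auto
      thus False using a(3) by simp
    qed
    have bc1: "b - c1 \<in> S" using c1P by (simp add: leS_def)
    obtain w0 where w0: "w0 \<in> factorizations S (b - c1)" using fact_exists[OF ns bc1] by blast
    obtain j where j: "j \<in> msg S" "a0 j > 0" using fact_nonzero[OF fm a(1) c1pos] by blast
    obtain k where k: "k \<in> msg S" "w0 k > 0" using fact_nonzero[OF fm w0] c1b by auto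
    define p0 where "p0 = (\<lambda>t. a0 t + w0 t)"
    define p1 where "p1 = (\<lambda>t. a1 t + w0 t)"
    have p0Z: "p0 \<in> Z" unfolding p0_def Z_def by (rule fact_add[OF a(1) w0]) (use c1b in simp)
    have p1Z: "p1 \<in> Z" unfolding p1_def Z_def by (rule fact_add[OF a(2) w0]) (use c1b in simp)
    have p01: "p0 \<noteq> p1"
    proof
      assume "p0 = p1"
      hence "\<And>t. a0 t = a1 t" unfolding p0_def p1_def by (metis add_right_cancel)
      thus False using a(3) by blast
    qed
    have p0ni: "\<not> isolated S b p0"
    proof
      assume "isolated S b p0"
      hence "dotp S p0 p1 = 0" using p1Z p01 Z_def by (auto simp: isolated_def)
      moreover have "dotp S p0 p1 \<noteq> 0" using dotp_iff[OF fm] k unfolding p0_def p1_def by auto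
      ultimately show False by simp
    qed
    define C where "C = R``{p0}"
    have conn: "\<And>z. z \<in> Z \<Longrightarrow> \<not> isolated S b z \<Longrightarrow> (z, p0) \<in> R"
    proof -
      fix z assume z: "z \<in> Z" "\<not> isolated S b z"
      obtain x where x: "x \<in> Z" "x \<noteq> z" "dotp S z x \<noteq> 0" using z unfolding isolated_def Z_def by auto
      obtain i where i: "i \<in> msg S" "z i > 0" "x i > 0" using dotp_iff[OF fm] x(3) by blast
      have zZ: "z \<in> factorizations S b" using z Z_def by simp
      have r1: "z(i := z i - 1) \<in> factorizations S (b - i)" "i \<le> b"
        using fact_remove[OF fm zZ i(1,2)] by auto
      have r2: "x(i := x i - 1) \<in> factorizations S (b - i)"
      proof -
        have xZ: "x \<in> factorizations S b" using x Z_def by simp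
        show ?thesis using fact_remove[OF fm xZ i(1) i(3)] by blast
      qed
      have ne: "z(i := z i - 1) \<noteq> x(i := x i - 1)" using upd_inj i x by blast
      obtain c where c: "c \<in> betti S" "leS S c (b - i)" using betti_below[OF ns r1(1) r2 ne] by blast
      have "leS S (b - i) b" using r1(2) msg_sub i(1) by (auto simp: leS_def)
      hence "leS S c b" using c leS_trans[OF ns] by blast
      hence "leS S c1 c" using c1min c(1) by blast
      hence l: "leS S c1 (b - i)" using c(2) leS_trans[OF ns] by blast
      hence bic: "b - i - c1 \<in> S" "c1 \<le> b - i" by (auto simp: leS_def)
      obtain w where w: "w \<in> factorizations S (b - i - c1)" using fact_exists[OF ns bic(1)] by blast
      define w1 where "w1 = (\<lambda>t. (if t = i then 1 else 0) + w t)"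
      have w1: "w1 \<in> factorizations S (b - c1)" unfolding w1_def
        by (rule fact_add[OF fact_unit[OF fm i(1)] w]) (use bic r1(2) in simp)
      define q where "q = (\<lambda>t. a0 t + w1 t)"
      have qZ: "q \<in> factorizations S b" unfolding q_def
        by (rule fact_add[OF a(1) w1]) (use c1b in simp)
      have "(z, q) \<in> R" unfolding R_def
        by (rule share_rtrancl[OF fm zZ qZ i(1) i(2)]) (simp add: q_def w1_def)
      moreover have "(q, p0) \<in> R" unfolding R_def
        by (rule share_rtrancl[OF fm qZ _ j(1)]) (use p0Z Z_def j in \<open>auto simp: q_def p0_def\<close>)
      ultimately show "(z, p0) \<in> R" unfolding R_def by (rule rtrancl_trans)
    qed
    define I where "I = {z. isolated S b z}"
    have IZ: "I \<subseteq> Z" by (auto simp: I_def Z_def isolated_def)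
    have finI: "finite I" using finite_subset[OF IZ] fact_finite[OF ns] Z_def by blast
    have iso_img: "\<And>z. z \<in> I \<Longrightarrow> R``{z} = {z}"
    proof -
      fix z assume z: "z \<in> I"
      have noedge: "\<And>y. (z, y) \<notin> nabla_edges S b"
      proof
        fix y assume "(z, y) \<in> nabla_edges S b"
        hence "y \<in> factorizations S b - {z}" "dotp S z y \<noteq> 0" by (auto simp: nabla_edges_def)
        moreover have "isolated S b z" using z I_def by simp
        ultimately show False unfolding isolated_def by (meson bspec)
      qed
      show "R``{z} = {z}"
      proof
        show "R``{z} \<subseteq> {z}"
        proof
          fix y assume "y \<in> R``{z}"
          hence "(z, y) \<in> (nabla_edges S b)\<^sup>*" by (simp add: R_def)
          thus "y \<in> {z}" using noedge by (auto elim: converse_rtranclE)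
        qed
      qed (auto simp: R_def)
    qed
    have niso_img: "\<And>z. z \<in> Z \<Longrightarrow> z \<notin> I \<Longrightarrow> R``{z} = C"
      unfolding C_def R_def using img_eq[OF sym_edges] conn R_def I_def by blast
    have quot: "Z // R = insert C ((\<lambda>z. {z}) ` I)"
    proof
      show "Z // R \<subseteq> insert C ((\<lambda>z. {z}) ` I)"
        unfolding quot_img using iso_img niso_img by blast
      show "insert C ((\<lambda>z. {z}) ` I) \<subseteq> Z // R"
        unfolding quot_img using iso_img IZ p0Z C_def by blast
    qed
    have Cn: "C \<notin> (\<lambda>z. {z}) ` I"
    proof
      assume "C \<in> (\<lambda>z. {z}) ` I"
      then obtain z where "z \<in> I" "C = {z}" by blast
      moreover have "p0 \<in> C" by (simp add: C_def R_def)
      ultimately show False using p0ni I_def by auto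
    qed
    have "nc S b = card I + 1"
      unfolding nc_def Z_def[symmetric] R_def[symmetric] quot
      using Cn finI by (simp add: card_image inj_on_def)
    hence "num_isolated S b = nc S b - 1" by (simp add: num_isolated_def I_def)
    thus ?thesis by blast
  qed
qed

end
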